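(* Let $k\geq 1$ and $n\geq 0$ be integers, and let $m$ be an integer with $\lfloor n/(k+1)\rfloor \leq m \leq \lfloor n/k\rfloor$. Then \[ \sum_{i=0}^{n} f_i^{(k)} = \sum_{j=0}^{m} (-1)^{j} \binom{n-jk}{j}2^{n-j(k+1)}. \]
   Context: For an integer $k\geq 1$, the $k$-bonacci numbers $f_n^{(k)}$ ($n\in\mathbb{Z}$) are defined by $f_n^{(k)}=0$ for $n<0$, $f_0^{(k)}=1$, and $f_n^{(k)}=\sum_{i=1}^{k} f_{n-i}^{(k)}$ for $n\geq 1$. Here $\lfloor x\rfloor$ is the floor function, and $\binom{a}{b}=0$ when $0\le a<b$. *)

theory Defs
  imports Complex_Main
begin

function kbonacci :: "nat \<Rightarrow> int \<Rightarrow> int" where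
  "kbonacci k n = (if n < 0 then 0 else if n = 0 then 1
                   else (\<Sum>i\<in>{1..int k}. kbonacci k (n - i)))"
  by auto
termination
  by (relation "measure (\<lambda>(k, n). nat (n + 1))") auto

end

theory Submission
  imports Defs
begin

definition hh :: "nat \<Rightarrow> nat \<Rightarrow> real" where
  "hh a j = (-1) ^ j * real (a choose j) * 2 ^ (a - j)"

lemma hh_pascal: "hh (Suc a) (Suc j) = 2 * hh a (Suc j) - hh a j"
proof (cases "j < a")
  case True
  then have "(2::real) ^ (a - j) = 2 * 2 ^ (a - Suc j)"
    by (metis Suc_diff_Suc power_Suc)
  then show ?thesis unfolding hh_def by (simp add: algebra_simps)
next
  case False
  then show ?thesis
  proof (cases "j = a")
    case True then show ?thesis unfolding hh_def by simp
  next
    case False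
    with \<open>\<not> j < a\<close> show ?thesis unfolding hh_def by (simp add: binomial_eq_0)
  qed
qed

definition tt :: "nat \<Rightarrow> nat \<Rightarrow> nat \<Rightarrow> real" where
  "tt k n j = hh (n - j * k) j"

definition PP :: "nat \<Rightarrow> nat \<Rightarrow> real" where
  "PP k n = (\<Sum>j\<le>n. tt k n j)"

lemma tt_zero: assumes "k \<ge> 1" "j * (k+1) > n" shows "tt k n j = 0"
proof -
  have "n < j + j * k" using assms by (simp add: algebra_simps)
  then have "n - j * k < j"
  proof (cases "j*k \<le> n")
    case True then show ?thesis using \<open>n < j + j * k\<close> by (simp add: less_diff_conv2 add.commute)
  next
    case False then have "j \<noteq> 0" by (cases j) auto
    with False show ?thesis by simp
  qed
  then show ?thesis unfolding tt_def hh_def by simp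
qed

lemma sum_tt_any: assumes "k \<ge> 1" "n div (k+1) \<le> M"
  shows "(\<Sum>j\<le>M. tt k n j) = (\<Sum>j\<le>n div (k+1). tt k n j)"
proof -
  have "\<forall>j\<in>{..M} - {..n div (k+1)}. tt k n j = 0"
  proof
    fix j assume "j \<in> {..M} - {..n div (k+1)}"
    then have "n div (k+1) < j" by auto
    then have "n < j * (k+1)"
      by (metis div_less_iff_less_mult zero_less_Suc add.commute plus_1_eq_Suc)
    then show "tt k n j = 0" using tt_zero assms by blast
  qed
  then show ?thesis using assms
    by (intro sum.mono_neutral_right) auto
qed

lemma PP_any: assumes "k \<ge> 1" "n div (k+1) \<le> M"
  shows "(\<Sum>j\<le>M. tt k n j) = PP k n"
  unfolding PP_def using sum_tt_any[OF assms] sum_tt_any[OF assms(1), of n n]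
  by (metis div_le_dividend)

lemma tt_step:
  assumes "k \<ge> 1"
  shows "tt k (Suc n) (Suc j) = 2 * tt k n (Suc j) - (if k \<le> n then tt k (n - k) j else 0)"
proof (cases "Suc j * k \<le> n")
  case True
  then have e1: "Suc n - Suc j * k = Suc (n - Suc j * k)" by simp
  have e2: "n - k - j * k = n - Suc j * k" by simp
  have "k \<le> n" using True by (metis le_add1 mult_Suc le_trans)
  then show ?thesis unfolding tt_def e1 e2 using hh_pascal by simp
next
  case False
  then have z1: "Suc n - Suc j * k = 0" "n - Suc j * k = 0" by auto
  have "hh 0 (Suc j) = 0" unfolding hh_def by simp
  moreover have "k \<le> n \<Longrightarrow> n - k - j * k = 0 \<and> j > 0" using False
    by (cases j) (auto simp: algebra_simps)
  moreover have "j > 0 \<Longrightarrow> hh 0 j = 0" for j unfolding hh_def by simp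
  ultimately show ?thesis unfolding tt_def z1 by auto
qed

lemma PP_step:
  assumes "k \<ge> 1"
  shows "PP k (Suc n) = 2 * PP k n - (if k \<le> n then PP k (n - k) else 0)"
proof -
  define c where "c = (\<lambda>j. if k \<le> n then tt k (n - k) j else 0)"
  have tt0: "tt k (Suc n) 0 = 2 * tt k n 0" unfolding tt_def hh_def by simp
  have s1: "PP k (Suc n) = tt k (Suc n) 0 + (\<Sum>j\<le>n. tt k (Suc n) (Suc j))"
    unfolding PP_def by (rule sum.atMost_Suc_shift)
  have s2: "(\<Sum>j\<le>n. tt k (Suc n) (Suc j)) = (\<Sum>j\<le>n. 2 * tt k n (Suc j) - c j)"
    unfolding c_def by (rule sum.cong[OF refl]) (rule tt_step[OF assms])
  have s3: "(\<Sum>j\<le>n. 2 * tt k n (Suc j) - c j) = 2 * (\<Sum>j\<le>n. tt k n (Suc j)) - (\<Sum>j\<le>n. c j)"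
    by (simp only: sum_subtractf sum_distrib_left)
  have s4: "tt k n 0 + (\<Sum>j\<le>n. tt k n (Suc j)) = (\<Sum>j\<le>Suc n. tt k n j)"
    by (rule sum.atMost_Suc_shift[symmetric])
  have "n div (k+1) \<le> Suc n" by (meson div_le_dividend le_SucI)
  then have s5: "(\<Sum>j\<le>Suc n. tt k n j) = PP k n" by (rule PP_any[OF assms])
  have s6: "(\<Sum>j\<le>n. c j) = (if k \<le> n then PP k (n - k) else 0)"
  proof (cases "k \<le> n")
    case True
    have "(n - k) div (k+1) \<le> n" by (meson div_le_dividend diff_le_self le_trans)
    then show ?thesis using True PP_any[OF assms, of "n - k" n] unfolding c_def by simp
  next
    case False then show ?thesis unfolding c_def by simp
  qed
  show ?thesis using s1 s2 s3 s4 s5 s6 tt0 by linarith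
qed

definition SS :: "nat \<Rightarrow> int \<Rightarrow> int" where
  "SS k y = (\<Sum>i\<in>{0..y}. kbonacci k i)"

lemma SS_diff: "SS k y - SS k (y - 1) = (if y \<ge> 0 then kbonacci k y else 0)"
proof (cases "y \<ge> 0")
  case True
  then have "{0..y} = insert y {0..y-1}" by auto
  then show ?thesis unfolding SS_def using True by simp
next
  case False then show ?thesis unfolding SS_def by simp
qed

lemma kb_neg: "i < 0 \<Longrightarrow> kbonacci k i = 0" by simp

lemma sum_shift: "(\<Sum>i\<in>{1..int j}. kbonacci k (x - i)) = SS k (x - 1) - SS k (x - 1 - int j)"
proof (induction j)
  case 0 then show ?case by simp
next
  case (Suc j)
  have "{1..int (Suc j)} = insert (int j + 1) {1..int j}" by auto
  then have "(\<Sum>i\<in>{1..int (Suc j)}. kbonacci k (x - i))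
     = kbonacci k (x - (int j + 1)) + (\<Sum>i\<in>{1..int j}. kbonacci k (x - i))" by simp
  also have "\<dots> = kbonacci k (x - 1 - int j) + SS k (x - 1) - SS k (x - 1 - int j)"
    using Suc by (simp del: kbonacci.simps add: algebra_simps)
  also have "kbonacci k (x - 1 - int j) = SS k (x - 1 - int j) - SS k (x - 1 - int j - 1)"
    using SS_diff[of k "x - 1 - int j"] by (auto simp: kb_neg)
  finally show ?case by simp
qed

lemma SS_step: assumes "y \<ge> 1"
  shows "SS k y = 2 * SS k (y - 1) - SS k (y - 1 - int k)"
proof -
  have "kbonacci k y = (\<Sum>i\<in>{1..int k}. kbonacci k (y - i))" using assms by simp
  also have "\<dots> = SS k (y - 1) - SS k (y - 1 - int k)" by (rule sum_shift)
  finally have "kbonacci k y = SS k (y - 1) - SS k (y - 1 - int k)" .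
  moreover have "SS k y - SS k (y - 1) = kbonacci k y" using SS_diff[of k y] assms by simp
  ultimately show ?thesis by simp
qed

lemma SS_neg: "y < 0 \<Longrightarrow> SS k y = 0" unfolding SS_def by simp

lemma SS_PP: assumes "k \<ge> 1" shows "real_of_int (SS k (int n)) = PP k n"
proof (induction n rule: less_induct)
  case (less n)
  show ?case
  proof (cases n)
    case 0
    then show ?thesis unfolding SS_def PP_def tt_def hh_def by simp
  next
    case (Suc n')
    have "SS k (int n) = 2 * SS k (int n') - SS k (int n' - int k)"
      using SS_step[of "int n" k] Suc by simp
    moreover have "real_of_int (SS k (int n')) = PP k n'" using less Suc by simp
    moreover have "real_of_int (SS k (int n' - int k)) = (if k \<le> n' then PP k (n' - k) else 0)"
    proof (cases "k \<le> n'")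
      case True
      then have "SS k (int n' - int k) = SS k (int (n' - k))" by (simp add: of_nat_diff)
      moreover have "real_of_int (SS k (int (n' - k))) = PP k (n' - k)" using less Suc by simp
      ultimately show ?thesis using True by simp
    next
      case False then show ?thesis by (simp add: SS_neg)
    qed
    ultimately show ?thesis using PP_step[OF assms, of n'] Suc by simp
  qed
qed

theorem corollary3p1:
  fixes k n :: nat and m :: int
  assumes "k \<ge> 1"
    and "\<lfloor>real n / real (k + 1)\<rfloor> \<le> m" and "m \<le> \<lfloor>real n / real k\<rfloor>"
  shows "real_of_int (\<Sum>i\<in>{0..int n}. kbonacci k i)
       = (\<Sum>j\<in>{0..m}. (-1) ^ nat j * real (nat (int n - j * int k) choose nat j)
                          * (2::real) powi (int n - j * (int k + 1)))"
proof -
  have f1: "\<lfloor>real n / real (k + 1)\<rfloor> = int (n div (k+1))"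
    by (metis floor_divide_of_nat_eq of_nat_Suc Suc_eq_plus1)
  have f2: "\<lfloor>real n / real k\<rfloor> = int (n div k)"
    by (metis floor_divide_of_nat_eq)
  define M where "M = nat m"
  have m0: "m \<ge> 0" using assms(2) f1 by linarith
  have mM: "m = int M" using m0 M_def by simp
  have Mle: "M \<le> n div k" using assms(3) f2 mM by simp
  have Mge: "n div (k+1) \<le> M" using assms(2) f1 mM by simp
  have ivl: "{0..m} = int ` {..M}" unfolding mM
    by (auto simp: image_iff intro!: bexI[where x="nat _"])
  have "(\<Sum>j\<in>{0..m}. (-1) ^ nat j * real (nat (int n - j * int k) choose nat j)
                          * (2::real) powi (int n - j * (int k + 1)))
      = (\<Sum>j\<le>M. (-1) ^ j * real (nat (int n - int j * int k) choose j)
                          * (2::real) powi (int n - int j * (int k + 1)))"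
    unfolding ivl by (subst sum.reindex) (auto simp: inj_on_def)
  also have "\<dots> = (\<Sum>j\<le>M. tt k n j)"
  proof (rule sum.cong[OF refl])
    fix j assume "j \<in> {..M}"
    then have "j \<le> n div k" using Mle by simp
    then have jk: "j * k \<le> n" using assms(1)
      by (simp add: less_eq_div_iff_mult_less_eq)
    then have "int n - int j * int k = int (n - j * k)" by (simp add: of_nat_diff)
    then have e1: "nat (int n - int j * int k) = n - j * k" by simp
    show "(-1) ^ j * real (nat (int n - int j * int k) choose j)
                          * (2::real) powi (int n - int j * (int k + 1)) = tt k n j"
    proof (cases "j \<le> n - j * k")
      case True
      then have "int n - int j * (int k + 1) = int (n - j * k - j)" using jk
        by (simp add: algebra_simps of_nat_diff)
      then show ?thesis unfolding tt_def hh_def e1 by (simp add: power_int_of_nat)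
    next
      case False
      then show ?thesis unfolding tt_def hh_def e1 by simp
    qed
  qed
  also have "\<dots> = PP k n" using PP_any[OF assms(1) Mge] .
  finally show ?thesis using SS_PP[OF assms(1), of n] unfolding SS_def by simp
qed

end
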